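(* Let $0<\alpha\le\delta<\infty$ and $0<\gamma<\tfrac13$. The map $\mathcal R^a_1(a)_k=\frac{1}{k+1}\sum_{n=0}^ka_na_{k-n}$ ($k\in\mathbb N_0$) maps $X_{\alpha,\delta}$ into itself and is continuous with respect to the metric $d(a,b)=\sum_{k\ge0}(\gamma/\delta)^k|a_k-b_k|$.
   Context: $X_{\alpha,\delta}$ is the set of real sequences $a=(a_k)_{k\ge0}$ with $a_0=1$, $a_1=\alpha$, $0\le a_k\le\delta^k$ for $k\ge2$. *)

theory Defs
  imports "HOL-Analysis.Analysis"
begin

definition Xad :: "real \<Rightarrow> real \<Rightarrow> (nat \<Rightarrow> real) set" where
  "Xad \<alpha> \<delta> = {a. a 0 = 1 \<and> a 1 = \<alpha> \<and> (\<forall>k\<ge>2. 0 \<le> a k \<and> a k \<le> \<delta> ^ k)}"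

definition R1 :: "(nat \<Rightarrow> real) \<Rightarrow> nat \<Rightarrow> real" where
  "R1 a k = (1 / real (k + 1)) * (\<Sum>n = 0..k. a n * a (k - n))"

definition dmet :: "real \<Rightarrow> real \<Rightarrow> (nat \<Rightarrow> real) \<Rightarrow> (nat \<Rightarrow> real) \<Rightarrow> real" where
  "dmet \<gamma> \<delta> a b = (\<Sum>k. (\<gamma> / \<delta>) ^ k * \<bar>a k - b k\<bar>)"

end

theory Submission
  imports Defs
begin

lemma Xad_bound:
  assumes "a \<in> Xad \<alpha> \<delta>" "0 < \<alpha>" "\<alpha> \<le> \<delta>"
  shows "0 \<le> a j \<and> a j \<le> \<delta> ^ j"
proof -
  consider "j = 0" | "j = 1" | "j \<ge> 2" by linarith
  then show ?thesis using assms unfolding Xad_def by cases auto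
qed

lemma R1_in:
  assumes "a \<in> Xad \<alpha> \<delta>" "0 < \<alpha>" "\<alpha> \<le> \<delta>"
  shows "R1 a \<in> Xad \<alpha> \<delta>"
proof -
  have a0: "a 0 = 1" and a1: "a 1 = \<alpha>" using assms(1) unfolding Xad_def by auto
  note b = Xad_bound[OF assms]
  have "R1 a 0 = 1" unfolding R1_def using a0 by simp
  moreover have "R1 a 1 = \<alpha>"
  proof -
    have "{0..1::nat} = {0,1}" by auto
    then show ?thesis unfolding R1_def using a0 a1 by simp
  qed
  moreover have "0 \<le> R1 a k \<and> R1 a k \<le> \<delta> ^ k" for k
  proof -
    have s0: "0 \<le> (\<Sum>n = 0..k. a n * a (k - n))"
      by (intro sum_nonneg) (simp add: b)
    have "(\<Sum>n = 0..k. a n * a (k - n)) \<le> (\<Sum>n = 0..k. \<delta> ^ n * \<delta> ^ (k - n))"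
      using b by (intro sum_mono mult_mono) (auto intro: order_trans[OF conjunct1[OF b] conjunct2[OF b]])
    also have "\<dots> = (\<Sum>n = 0..k. \<delta> ^ k)"
      by (intro sum.cong refl) (simp add: power_add[symmetric])
    also have "\<dots> = real (k + 1) * \<delta> ^ k" by simp
    finally have "(\<Sum>n = 0..k. a n * a (k - n)) \<le> real (k + 1) * \<delta> ^ k" .
    then show ?thesis using s0 unfolding R1_def
      by (simp add: field_simps)
  qed
  ultimately show ?thesis unfolding Xad_def by auto
qed

lemma term_bound:
  assumes a: "a \<in> Xad \<alpha> \<delta>" and bb: "b \<in> Xad \<alpha> \<delta>" and "0 < \<alpha>" "\<alpha> \<le> \<delta>" "0 \<le> \<gamma>"
    and nk: "n \<le> k"
  shows "(\<gamma>/\<delta>) ^ k * \<bar>a n * a (k - n) - b n * b (k - n)\<bar> \<le>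
     ((\<gamma>/\<delta>)^n * \<bar>a n - b n\<bar>) * \<gamma> ^ (k - n) + \<gamma> ^ n * ((\<gamma>/\<delta>)^(k-n) * \<bar>a (k-n) - b (k-n)\<bar>)"
proof -
  define r where "r = \<gamma>/\<delta>"
  have dpos: "\<delta> > 0" using assms by linarith
  have r0: "r \<ge> 0" unfolding r_def using dpos assms by simp
  note ba = Xad_bound[OF a assms(3,4)] and bb' = Xad_bound[OF bb assms(3,4)]
  have eq: "a n * a (k - n) - b n * b (k - n) = (a n - b n) * a (k-n) + b n * (a (k-n) - b (k-n))"
    by (simp add: algebra_simps)
  have "\<bar>a n * a (k - n) - b n * b (k - n)\<bar> \<le> \<bar>a n - b n\<bar> * \<bar>a (k-n)\<bar> + \<bar>b n\<bar> * \<bar>a (k-n) - b (k-n)\<bar>"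
    unfolding eq by (metis abs_mult abs_triangle_ineq)
  also have "\<dots> \<le> \<bar>a n - b n\<bar> * \<delta> ^ (k-n) + \<delta> ^ n * \<bar>a (k-n) - b (k-n)\<bar>"
    using ba bb' by (intro add_mono mult_mono) (auto intro: order_trans[OF conjunct1[OF ba] conjunct2[OF ba]])
  finally have h: "\<bar>a n * a (k - n) - b n * b (k - n)\<bar> \<le> \<bar>a n - b n\<bar> * \<delta> ^ (k-n) + \<delta> ^ n * \<bar>a (k-n) - b (k-n)\<bar>" .
  have rk: "r ^ k = r ^ n * r ^ (k - n)" using nk by (simp add: power_add[symmetric])
  have rd: "r ^ m * \<delta> ^ m = \<gamma> ^ m" for m
    unfolding r_def using dpos by (simp add: power_mult_distrib[symmetric])
  have "r ^ k * \<bar>a n * a (k - n) - b n * b (k - n)\<bar> \<le> r ^ k * (\<bar>a n - b n\<bar> * \<delta> ^ (k-n) + \<delta> ^ n * \<bar>a (k-n) - b (k-n)\<bar>)"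
    using h r0 by (intro mult_left_mono) auto
  also have "\<dots> = (r^n * \<bar>a n - b n\<bar>) * (r ^ (k-n) * \<delta> ^ (k-n)) + (r ^ n * \<delta> ^ n) * (r^(k-n) * \<bar>a (k-n) - b (k-n)\<bar>)"
    unfolding rk by (simp add: algebra_simps)
  also have "\<dots> = (r^n * \<bar>a n - b n\<bar>) * \<gamma> ^ (k-n) + \<gamma> ^ n * (r^(k-n) * \<bar>a (k-n) - b (k-n)\<bar>)"
    by (simp add: rd)
  finally show ?thesis unfolding r_def .
qed

theorem lemma8:
  fixes \<alpha> \<delta> \<gamma> :: real
  assumes "0 < \<alpha>" and "\<alpha> \<le> \<delta>" and "0 < \<gamma>" and "\<gamma> < 1/3"
  shows "(\<forall>a \<in> Xad \<alpha> \<delta>. R1 a \<in> Xad \<alpha> \<delta>) \<and>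
    (\<forall>a \<in> Xad \<alpha> \<delta>. \<forall>\<epsilon>>0. \<exists>\<eta>>0. \<forall>b \<in> Xad \<alpha> \<delta>.
        dmet \<gamma> \<delta> a b < \<eta> \<longrightarrow> dmet \<gamma> \<delta> (R1 a) (R1 b) < \<epsilon>)"
proof (intro conjI ballI allI impI)
  fix a assume "a \<in> Xad \<alpha> \<delta>"
  then show "R1 a \<in> Xad \<alpha> \<delta>" using R1_in assms by blast
next
  define r where "r = \<gamma>/\<delta>"
  have dpos: "\<delta> > 0" using assms by linarith
  have r0: "r \<ge> 0" unfolding r_def using dpos assms by simp
  have g1: "\<gamma> < 1" using assms by simp
  have gsum: "summable (\<lambda>m. \<gamma> ^ m)" using g1 assms by (simp add: summable_geometric)
  have gval: "(\<Sum>m. \<gamma> ^ m) = 1 / (1 - \<gamma>)" using g1 assms by (simp add: suminf_geometric)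
  have key: "dmet \<gamma> \<delta> (R1 a) (R1 b) \<le> 2 * dmet \<gamma> \<delta> a b / (1 - \<gamma>)"
    if a: "a \<in> Xad \<alpha> \<delta>" and b: "b \<in> Xad \<alpha> \<delta>" for a b
  proof -
    define u where "u n = r ^ n * \<bar>a n - b n\<bar>" for n
    have u0: "u n \<ge> 0" for n unfolding u_def using r0 by simp
    have ub: "u n \<le> 2 * \<gamma> ^ n" for n
    proof -
      note ba = Xad_bound[OF a assms(1,2), of n] and bb = Xad_bound[OF b assms(1,2), of n]
      have "\<bar>a n - b n\<bar> \<le> 2 * \<delta> ^ n" using ba bb by linarith
      hence "u n \<le> r ^ n * (2 * \<delta> ^ n)" unfolding u_def using r0 by (intro mult_left_mono) auto
      also have "\<dots> = 2 * \<gamma> ^ n" unfolding r_def using dpos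
        by (simp add: power_mult_distrib[symmetric])
      finally show ?thesis .
    qed
    have usum: "summable u"
      by (rule summable_comparison_test[of _ "\<lambda>n. 2 * \<gamma> ^ n"]) (use u0 ub gsum in auto)
    have dab: "dmet \<gamma> \<delta> a b = (\<Sum>n. u n)" unfolding dmet_def u_def r_def ..
    define c where "c k = (\<Sum>i\<le>k. u i * \<gamma> ^ (k - i))" for k
    have csums: "c sums ((\<Sum>n. u n) * (\<Sum>m. \<gamma> ^ m))"
      unfolding c_def
      by (rule Cauchy_product_sums) (use usum gsum u0 assms in auto)
    have tb: "r ^ k * \<bar>R1 a k - R1 b k\<bar> \<le> 2 * c k" for k
    proof -
      have "R1 a k - R1 b k = (1 / real (k + 1)) * (\<Sum>n = 0..k. a n * a (k - n) - b n * b (k - n))"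
        unfolding R1_def by (simp add: sum_subtractf algebra_simps)
      hence "\<bar>R1 a k - R1 b k\<bar> \<le> \<bar>\<Sum>n = 0..k. a n * a (k - n) - b n * b (k - n)\<bar>"
        by (simp add: abs_mult divide_le_eq mult_le_cancel_left1)
      also have "\<dots> \<le> (\<Sum>n = 0..k. \<bar>a n * a (k - n) - b n * b (k - n)\<bar>)" by (rule sum_abs)
      finally have "r ^ k * \<bar>R1 a k - R1 b k\<bar> \<le> r ^ k * (\<Sum>n = 0..k. \<bar>a n * a (k - n) - b n * b (k - n)\<bar>)"
        using r0 by (intro mult_left_mono) auto
      also have "\<dots> = (\<Sum>n = 0..k. r ^ k * \<bar>a n * a (k - n) - b n * b (k - n)\<bar>)"
        by (simp add: sum_distrib_left)
      also have "\<dots> \<le> (\<Sum>n = 0..k. u n * \<gamma> ^ (k - n) + \<gamma> ^ n * u (k - n))"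
        unfolding u_def r_def
        by (intro sum_mono term_bound[OF a b assms(1,2)]) (use assms in auto)
      also have "\<dots> = (\<Sum>n = 0..k. u n * \<gamma> ^ (k - n)) + (\<Sum>n = 0..k. \<gamma> ^ n * u (k - n))"
        by (simp add: sum.distrib)
      also have "(\<Sum>n = 0..k. \<gamma> ^ n * u (k - n)) = (\<Sum>n = 0..k. \<gamma> ^ (k - n) * u (k - (k - n)))"
        using sum.atLeastAtMost_rev[of "\<lambda>n. \<gamma> ^ n * u (k - n)" 0 k] by simp
      also have "\<dots> = (\<Sum>n = 0..k. u n * \<gamma> ^ (k - n))"
        by (intro sum.cong refl) auto
      finally show ?thesis unfolding c_def by (simp add: atLeast0AtMost)
    qed
    have t0: "0 \<le> r ^ k * \<bar>R1 a k - R1 b k\<bar>" for k using r0 by simp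
    have csum: "summable c" using csums by (simp add: sums_iff)
    have s1: "summable (\<lambda>k. r ^ k * \<bar>R1 a k - R1 b k\<bar>)"
      by (rule summable_comparison_test[of _ "\<lambda>k. 2 * c k"]) (use t0 tb csum in auto)
    have "dmet \<gamma> \<delta> (R1 a) (R1 b) = (\<Sum>k. r ^ k * \<bar>R1 a k - R1 b k\<bar>)"
      unfolding dmet_def r_def ..
    also have "\<dots> \<le> (\<Sum>k. 2 * c k)"
      by (rule suminf_le) (use tb s1 csum in auto)
    also have "\<dots> = 2 * ((\<Sum>n. u n) * (\<Sum>m. \<gamma> ^ m))"
      using csums by (simp add: sums_iff suminf_mult)
    also have "\<dots> = 2 * dmet \<gamma> \<delta> a b / (1 - \<gamma>)" by (simp add: dab gval)
    finally show ?thesis .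
  qed
  fix a \<epsilon> assume a: "a \<in> Xad \<alpha> \<delta>" and e: "(\<epsilon>::real) > 0"
  show "\<exists>\<eta>>0. \<forall>b \<in> Xad \<alpha> \<delta>. dmet \<gamma> \<delta> a b < \<eta> \<longrightarrow> dmet \<gamma> \<delta> (R1 a) (R1 b) < \<epsilon>"
  proof (intro exI[of _ "\<epsilon> * (1 - \<gamma>) / 2"] conjI ballI impI)
    show "0 < \<epsilon> * (1 - \<gamma>) / 2" using e g1 by simp
    fix b assume b: "b \<in> Xad \<alpha> \<delta>" and d: "dmet \<gamma> \<delta> a b < \<epsilon> * (1 - \<gamma>) / 2"
    have "2 * dmet \<gamma> \<delta> a b / (1 - \<gamma>) < \<epsilon>" using d g1 by (simp add: field_simps)
    then show "dmet \<gamma> \<delta> (R1 a) (R1 b) < \<epsilon>" using key[OF a b] by linarith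
  qed
qed

end
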